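(* For each $\mu\in \mathcal{M}^*(X)$, the set $(\pi_{f*})^{-1}(\mu)$ consists of a single point, which we denote by $\mu_f$. The map $\mathcal{M}^*(X)\rightarrow \mathcal{M}(X_f)$ sending $\mu$ to $\mu_f$ is continuous.
   Context: Let $\Gamma$ (countably infinite) act minimally and continuously on a compact metrizable space $X$ which consists of more than one orbit. Let $x_1\in X$ have trivial stabilizer, and let $f:X\setminus\{x_1\}\to\{1,-1\}$ be continuous but not continuously extendable to $X$. McMahon's construction gives a minimal action $\Gamma\curvearrowright X_f$ on a compact metrizable space and a factor map $\pi_f:X_f\to X$ such that $\pi_f^{-1}(x)$ is one point for $x\notin\Gamma x_1$ and two points for $x\in\Gamma x_1$, and $f\circ\pi_f$ extends continuously to $X_f$. For a compact metrizable space $W$, $\mathcal{M}(W)$ denotes the space of Borel probability measures on $W$ with the weak$^*$-topology; $\mathcal{M}^*(X)$ is the set of nonatomic $\mu\in\mathcal{M}(X)$ (i.e. $\mu(\{x\})=0$ for all $x$), and $\pi_{f*}:\mathcal{M}(X_f)\to\mathcal{M}(X)$ is the continuous surjection induced by $\pi_f$. *)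

theory Defs
  imports "HOL-Analysis.Analysis" "HOL-Probability.Probability"
begin

definition prob_measures :: "'a::topological_space measure set" where
  "prob_measures = {M. sets M = sets (borel :: 'a measure) \<and> prob_space M}"

definition weak_star :: "'a::topological_space measure topology" where
  "weak_star = topology_generated_by
     {{M \<in> prob_measures. (\<integral>x. g x \<partial>M) \<in> U} | g U.
        continuous_on UNIV (g :: 'a \<Rightarrow> real) \<and> open U}"

definition nonatomic_measures :: "'a::topological_space measure set" where
  "nonatomic_measures = {M \<in> prob_measures. \<forall>x. emeasure M {x} = 0}"

definition push :: "('b::topological_space \<Rightarrow> 'a::topological_space) \<Rightarrow> 'b measure \<Rightarrow> 'a measure" where
  "push \<pi> M = distr M borel \<pi>"

definition is_action :: "('g::group_add \<Rightarrow> 'a \<Rightarrow> 'a) \<Rightarrow> bool" where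
  "is_action act \<longleftrightarrow> (\<forall>x. act 0 x = x) \<and> (\<forall>g h x. act (g + h) x = act g (act h x))"

definition orbit :: "('g \<Rightarrow> 'a \<Rightarrow> 'a) \<Rightarrow> 'a \<Rightarrow> 'a set" where
  "orbit act x = range (\<lambda>g. act g x)"

text \<open>Continuous action (\<Gamma> discrete) which is minimal (every orbit dense).\<close>
definition minimal_continuous_action :: "('g::group_add \<Rightarrow> 'a::topological_space \<Rightarrow> 'a) \<Rightarrow> bool" where
  "minimal_continuous_action act \<longleftrightarrow> is_action act \<and> (\<forall>g. continuous_on UNIV (act g))
     \<and> (\<forall>x. closure (orbit act x) = UNIV)"

end

theory Submission
  imports Defs
begin

locale sect =
  fixes \<pi> :: "'y::metric_space \<Rightarrow> 'x::metric_space" and Ob :: "'x set"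
  assumes cpt: "compact (UNIV :: 'y set)"
    and pcont: "continuous_on UNIV \<pi>"
    and psurj: "surj \<pi>"
    and Ocount: "countable Ob"
    and uniq: "\<And>x. x \<notin> Ob \<Longrightarrow> \<exists>!y. \<pi> y = x"
begin

definition s :: "'x \<Rightarrow> 'y" where "s x = (SOME y. \<pi> y = x)"

lemma pi_s: "\<pi> (s x) = x"
proof -
  obtain y where "\<pi> y = x" using psurj by (metis surjD)
  then show ?thesis unfolding s_def by (rule someI)
qed

lemma s_pi: "\<pi> y \<notin> Ob \<Longrightarrow> s (\<pi> y) = y"
  using uniq[of "\<pi> y"] pi_s[of "\<pi> y"] by blast

lemma image_closed: "closed C \<Longrightarrow> closed (\<pi> ` C)"
proof -
  assume "closed C"
  then have "compact C" using compact_Int_closed[OF cpt] by (metis inf_top_left)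
  then have "compact (\<pi> ` C)" by (rule compact_continuous_image[OF continuous_on_subset[OF pcont subset_UNIV]])
  then show ?thesis by (rule compact_imp_closed)
qed

lemma s_pre_closed: "closed C \<Longrightarrow> s -` C \<in> sets borel"
proof -
  assume C: "closed C"
  have eq: "s -` C = (\<pi> ` C - Ob) \<union> (s -` C \<inter> Ob)"
  proof (intro set_eqI iffI)
    fix x assume x: "x \<in> s -` C"
    show "x \<in> (\<pi> ` C - Ob) \<union> (s -` C \<inter> Ob)"
    proof (cases "x \<in> Ob")
      case False
      have "x = \<pi> (s x)" by (simp add: pi_s)
      then have "x \<in> \<pi> ` C" using x by (metis imageI vimageE)
      then show ?thesis using False by blast
    qed (use x in blast)
  next
    fix x assume x: "x \<in> (\<pi> ` C - Ob) \<union> (s -` C \<inter> Ob)"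
    show "x \<in> s -` C"
    proof (cases "x \<in> Ob")
      case False
      then obtain y where y: "y \<in> C" "x = \<pi> y" using x by blast
      then have "s x = y" using s_pi[of y] False by simp
      then show ?thesis using y by simp
    qed (use x in blast)
  qed
  have Obs: "\<And>A. A \<subseteq> Ob \<Longrightarrow> A \<in> sets borel"
  proof -
    fix A assume "A \<subseteq> Ob"
    then have "countable A" using Ocount countable_subset by blast
    moreover have "\<And>a. a \<in> A \<Longrightarrow> {a} \<in> sets borel" by (rule borel_closed) simp
    ultimately show "A \<in> sets borel" using sets.countable by blast
  qed
  have "s -` C \<inter> Ob \<in> sets borel" by (rule Obs) blast
  moreover have "\<pi> ` C - Ob \<in> sets borel"
    using image_closed[OF C] Obs[of Ob] by (intro sets.Diff[OF borel_closed]) simp_all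
  ultimately show ?thesis by (subst eq) (rule sets.Un)
qed

lemma s_meas: "s \<in> borel_measurable borel"
proof (rule borel_measurableI)
  fix S :: "'y set" assume S: "open S"
  have "s -` (- S) \<in> sets borel" by (rule s_pre_closed[OF closed_Compl[OF S]])
  then have "- (s -` (- S)) \<in> sets borel" by (rule borel_comp)
  moreover have "s -` S \<inter> space borel = - (s -` (- S))" by auto
  ultimately show "s -` S \<inter> space borel \<in> sets borel" by simp
qed

lemma pi_meas: "\<pi> \<in> borel_measurable borel"
  using pcont by (rule borel_measurable_continuous_onI)

lemma O_null: assumes "\<mu> \<in> nonatomic_measures" shows "Ob \<in> null_sets \<mu>"
proof -
  from assms have sm: "sets \<mu> = sets borel" and z: "\<And>x. emeasure \<mu> {x} = 0"
    unfolding nonatomic_measures_def prob_measures_def by auto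
  have "(\<Union>x\<in>Ob. {x}) \<in> null_sets \<mu>"
    by (rule null_sets_UN'[OF Ocount]) (simp add: null_sets_def sm z)
  then show ?thesis by simp
qed

lemma lift_iff:
  assumes mu: "\<mu> \<in> nonatomic_measures"
  shows "(\<nu> \<in> prob_measures \<and> push \<pi> \<nu> = \<mu>) \<longleftrightarrow> \<nu> = distr \<mu> borel s"
proof -
  from mu have sm: "sets \<mu> = sets borel" and ps: "prob_space \<mu>"
    unfolding nonatomic_measures_def prob_measures_def by auto
  have smeas: "s \<in> measurable \<mu> borel" using s_meas measurable_cong_sets[OF sm refl] by blast
  show ?thesis
  proof
    assume H: "\<nu> \<in> prob_measures \<and> push \<pi> \<nu> = \<mu>"
    then have sn: "sets \<nu> = sets borel" and eq: "distr \<nu> borel \<pi> = \<mu>"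
      unfolding prob_measures_def push_def by auto
    have pm: "\<pi> \<in> measurable \<nu> borel" using pi_meas measurable_cong_sets[OF sn refl] by blast
    have sm2: "s \<in> measurable (distr \<nu> borel \<pi>) borel" using s_meas by simp
    have "Ob \<in> null_sets (distr \<nu> borel \<pi>)" using O_null[OF mu] eq by simp
    then have "\<pi> -` Ob \<inter> space \<nu> \<in> null_sets \<nu>"
      using pm by (simp add: null_sets_distr_iff)
    then have ae: "AE y in \<nu>. s (\<pi> y) = y"
      by (rule AE_I') (use s_pi in blast)
    have "distr \<mu> borel s = distr (distr \<nu> borel \<pi>) borel s" using eq by simp
    also have "\<dots> = distr \<nu> borel (s \<circ> \<pi>)" using distr_distr[OF s_meas pm] by simp
    also have "\<dots> = distr \<nu> borel (\<lambda>x. x)"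
    proof (rule distr_cong_AE[OF refl refl])
      show "AE x in \<nu>. (s \<circ> \<pi>) x = x" using ae by simp
      show "s \<circ> \<pi> \<in> measurable \<nu> borel" by (rule measurable_comp[OF pm s_meas])
      show "(\<lambda>x. x) \<in> measurable \<nu> borel" by (rule measurable_ident_sets[OF sn])
    qed
    also have "\<dots> = \<nu>" by (rule distr_id2) (simp add: sn)
    finally show "\<nu> = distr \<mu> borel s" by simp
  next
    assume H: "\<nu> = distr \<mu> borel s"
    have "prob_space \<nu>" unfolding H by (rule prob_space.prob_space_distr[OF ps smeas])
    moreover have "sets \<nu> = sets borel" using H by simp
    moreover have "push \<pi> \<nu> = \<mu>"
    proof -
      have "push \<pi> \<nu> = distr \<mu> borel (\<pi> \<circ> s)" unfolding push_def H
        by (rule distr_distr) (use pi_meas smeas in auto)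
      also have "\<pi> \<circ> s = (\<lambda>x. x)" using pi_s by auto
      finally show ?thesis using distr_id2[of borel \<mu>] sm by simp
    qed
    ultimately show "\<nu> \<in> prob_measures \<and> push \<pi> \<nu> = \<mu>" unfolding prob_measures_def by simp
  qed
qed

lemma s_cont: assumes "x \<notin> Ob" shows "isCont s x"
  unfolding continuous_at_open
proof (intro allI impI)
  fix V assume V: "open V \<and> s x \<in> V"
  have cl: "closed (\<pi> ` (- V))" using V by (intro image_closed) auto
  have xn: "x \<notin> \<pi> ` (- V)"
  proof
    assume "x \<in> \<pi> ` (- V)"
    then obtain y where "y \<notin> V" "\<pi> y = x" by auto
    then show False using s_pi[of y] assms V by auto
  qed
  show "\<exists>S. open S \<and> x \<in> S \<and> (\<forall>x'\<in>S. s x' \<in> V)"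
    apply (rule exI[of _ "- \<pi> ` (- V)"])
    using cl xn pi_s by (auto simp: open_Compl) (metis ComplI imageI)
qed

end

lemma upper_approx:
  fixes h :: "'a::metric_space \<Rightarrow> real" and M :: "'a measure"
  assumes fm: "finite_measure M" and sM: "sets M = sets borel"
    and hm: "h \<in> borel_measurable borel" and hb: "\<And>x. \<bar>h x\<bar> \<le> B"
    and ae: "AE x in M. isCont h x" and e: "e > 0"
  shows "\<exists>\<psi>. continuous_on UNIV \<psi> \<and> (\<forall>x. h x \<le> \<psi> x) \<and> (\<forall>x. \<bar>\<psi> x\<bar> \<le> B)
           \<and> (\<integral>x. \<psi> x \<partial>M) < (\<integral>x. h x \<partial>M) + e"
proof -
  define \<psi> where "\<psi> n x = (SUP y. h y - real n * dist x y)" for n :: nat and x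
  have bdd: "bdd_above (range (\<lambda>y. h y - real n * dist x y))" for n x
  proof (rule bdd_aboveI2)
    fix y
    have "h y \<le> B" using hb[of y] by linarith
    moreover have "0 \<le> real n * dist x y" by simp
    ultimately show "h y - real n * dist x y \<le> B" by linarith
  qed
  have ge: "h x \<le> \<psi> n x" for n x
  proof -
    have "h x - real n * dist x x \<le> \<psi> n x" unfolding \<psi>_def by (rule cSUP_upper[OF UNIV_I bdd])
    then show ?thesis by simp
  qed
  have le: "\<psi> n x \<le> B" for n x
    unfolding \<psi>_def
  proof (rule cSUP_least)
    fix y
    have "h y \<le> B" using hb[of y] by linarith
    moreover have "0 \<le> real n * dist x y" by simp
    ultimately show "h y - real n * dist x y \<le> B" by linarith
  qed simp
  have abs: "\<bar>\<psi> n x\<bar> \<le> B" for n x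
    using ge[of x n] le[of n x] hb[of x] by linarith
  have lip1: "\<psi> n x \<le> \<psi> n x' + real n * dist x x'" for n x x'
  proof -
    have "\<psi> n x \<le> \<psi> n x' + real n * dist x x'"
      unfolding \<psi>_def[of n x]
    proof (rule cSUP_least)
      fix y
      have "h y - real n * dist x' y \<le> \<psi> n x'" unfolding \<psi>_def by (rule cSUP_upper[OF UNIV_I bdd])
      moreover have "dist x' y \<le> dist x y + dist x x'" by (metis dist_commute dist_triangle)
      then have "real n * dist x' y \<le> real n * dist x y + real n * dist x x'"
        by (metis distrib_left mult_left_mono of_nat_0_le_iff)
      ultimately show "h y - real n * dist x y \<le> \<psi> n x' + real n * dist x x'" by linarith
    qed simp
    then show ?thesis .
  qed
  have cont: "continuous_on UNIV (\<psi> n)" for n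
  proof (rule lipschitz_on_continuous_on)
    show "(real n)-lipschitz_on UNIV (\<psi> n)"
    proof (rule lipschitz_onI)
      fix x y :: 'a
      have "\<psi> n x \<le> \<psi> n y + real n * dist x y" by (rule lip1)
      moreover have "\<psi> n y \<le> \<psi> n x + real n * dist y x" by (rule lip1)
      ultimately show "dist (\<psi> n x) (\<psi> n y) \<le> real n * dist x y"
        by (simp add: dist_real_def dist_commute abs_le_iff)
    qed simp
  qed
  have conv: "(\<lambda>n. \<psi> n x) \<longlonglongrightarrow> h x" if hc: "isCont h x" for x
  proof (rule LIMSEQ_I)
    fix r :: real assume r: "r > 0"
    obtain d where d: "d > 0" "\<And>y. dist y x < d \<Longrightarrow> dist (h y) (h x) < r / 2"
      using hc r unfolding continuous_at_eps_delta by (metis half_gt_zero)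
    obtain N :: nat where N: "2 * B / d < real N" using reals_Archimedean2 by blast
    show "\<exists>no. \<forall>n\<ge>no. norm (\<psi> n x - h x) < r"
    proof (intro exI allI impI)
      fix n assume "N \<le> n"
      then have nN: "2 * B / d < real n" using N by linarith
      have B0: "0 \<le> B" using hb[of x] by linarith
      have "\<psi> n x \<le> h x + r / 2"
        unfolding \<psi>_def
      proof (rule cSUP_least)
        fix y
        show "h y - real n * dist x y \<le> h x + r / 2"
        proof (cases "dist y x < d")
          case True
          have "\<bar>h y - h x\<bar> < r / 2" using d(2)[OF True] by (simp only: dist_real_def)
          then have "h y < h x + r / 2" by linarith
          moreover have "0 \<le> real n * dist x y" by simp
          ultimately show ?thesis by linarith
        next
          case False
          then have dd: "d \<le> dist x y" by (simp add: dist_commute)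
          have "2 * B < real n * d" using nN d(1) by (simp add: divide_less_eq)
          also have "\<dots> \<le> real n * dist x y" using dd by (simp add: mult_left_mono)
          finally have "2 * B < real n * dist x y" .
          moreover have "h y \<le> B" "- B \<le> h x" using hb[of y] hb[of x] by linarith+
          ultimately show ?thesis using r by linarith
        qed
      qed simp
      then show "norm (\<psi> n x - h x) < r" using ge[of x n] r by simp
    qed
  qed
  have "(\<lambda>n. \<integral>x. \<psi> n x \<partial>M) \<longlonglongrightarrow> (\<integral>x. h x \<partial>M)"
  proof (rule integral_dominated_convergence[where w="\<lambda>_. B"])
    show "h \<in> borel_measurable M" using hm measurable_cong_sets[OF sM refl] by blast
    show "\<psi> n \<in> borel_measurable M" for n
      using borel_measurable_continuous_onI[OF cont[of n]] measurable_cong_sets[OF sM refl] by blast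
    show "integrable M (\<lambda>_. B)" using fm by (rule finite_measure.integrable_const)
    show "AE x in M. (\<lambda>n. \<psi> n x) \<longlonglongrightarrow> h x" using ae by (rule eventually_mono) (rule conv)
    show "AE x in M. norm (\<psi> n x) \<le> B" for n using abs by simp
  qed
  then have "eventually (\<lambda>n. (\<integral>x. \<psi> n x \<partial>M) < (\<integral>x. h x \<partial>M) + e) sequentially"
    using e by (intro order_tendstoD(2)) auto
  then obtain n where "(\<integral>x. \<psi> n x \<partial>M) < (\<integral>x. h x \<partial>M) + e" by (metis eventually_sequentially order_refl)
  then show ?thesis using cont[of n] ge abs by blast
qed

lemma (in sect) nbhd:
  fixes g :: "'y \<Rightarrow> real"
  assumes g: "continuous_on UNIV g" and mu0: "\<mu>0 \<in> nonatomic_measures" and e: "e > 0"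
  shows "\<exists>W. openin weak_star W \<and> \<mu>0 \<in> W \<and>
    (\<forall>\<mu>\<in>W \<inter> nonatomic_measures. \<bar>(\<integral>x. g (s x) \<partial>\<mu>) - (\<integral>x. g (s x) \<partial>\<mu>0)\<bar> < e)"
proof -
  have "compact (g ` UNIV)" by (rule compact_continuous_image[OF g cpt])
  then have "bounded (g ` UNIV)" by (rule compact_imp_bounded)
  then obtain B where B: "\<And>y. \<bar>g y\<bar> \<le> B" unfolding bounded_iff by auto
  define h where "h = (\<lambda>x. g (s x))"
  have hb: "\<bar>h x\<bar> \<le> B" for x unfolding h_def by (simp add: B)
  have hm: "h \<in> borel_measurable borel"
    unfolding h_def by (rule measurable_compose[OF s_meas borel_measurable_continuous_onI[OF g]])
  have hc: "isCont h x" if "x \<notin> Ob" for x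
  proof -
    have gc: "isCont g (s x)" using g continuous_on_eq_continuous_at[OF open_UNIV] by blast
    show ?thesis unfolding h_def by (rule isCont_o2[OF s_cont[OF that] gc])
  qed
  have sm0: "sets \<mu>0 = sets borel" and ps0: "prob_space \<mu>0"
    using mu0 unfolding nonatomic_measures_def prob_measures_def by auto
  have fm0: "finite_measure \<mu>0" using ps0 unfolding prob_space_def by blast
  have ae: "AE x in \<mu>0. isCont h x"
    by (rule AE_I'[OF O_null[OF mu0]]) (use hc in blast)
  obtain \<psi> where \<psi>: "continuous_on UNIV \<psi>" "\<forall>x. h x \<le> \<psi> x" "\<forall>x. \<bar>\<psi> x\<bar> \<le> B"
      "(\<integral>x. \<psi> x \<partial>\<mu>0) < (\<integral>x. h x \<partial>\<mu>0) + e"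
    using upper_approx[OF fm0 sm0 hm hb ae e] by blast
  have hm': "(\<lambda>x. - h x) \<in> borel_measurable borel" using hm by simp
  have hb': "\<bar>- h x\<bar> \<le> B" for x using hb[of x] by simp
  have ae': "AE x in \<mu>0. isCont (\<lambda>x. - h x) x" using ae by (rule eventually_mono) simp
  obtain \<phi> where \<phi>: "continuous_on UNIV \<phi>" "\<forall>x. - h x \<le> \<phi> x" "\<forall>x. \<bar>\<phi> x\<bar> \<le> B"
      "(\<integral>x. \<phi> x \<partial>\<mu>0) < (\<integral>x. - h x \<partial>\<mu>0) + e"
    using upper_approx[OF fm0 sm0 hm' hb' ae' e] by blast
  define a where "a = (\<integral>x. h x \<partial>\<mu>0)"
  define W1 where "W1 = {M \<in> prob_measures. (\<integral>x. \<psi> x \<partial>M) \<in> {..< a + e}}"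
  define W2 where "W2 = {M \<in> prob_measures. (\<integral>x. \<phi> x \<partial>M) \<in> {..< - a + e}}"
  have o1: "openin weak_star W1" unfolding weak_star_def
  proof (rule topology_generated_by_Basis)
    show "W1 \<in> {{M \<in> prob_measures. (\<integral>x. g x \<partial>M) \<in> U} | g U. continuous_on UNIV (g :: 'x \<Rightarrow> real) \<and> open U}"
      unfolding W1_def using \<psi>(1) by (intro CollectI exI[of _ \<psi>] exI[of _ "{..< a + e}"]) simp
  qed
  have o2: "openin weak_star W2" unfolding weak_star_def
  proof (rule topology_generated_by_Basis)
    show "W2 \<in> {{M \<in> prob_measures. (\<integral>x. g x \<partial>M) \<in> U} | g U. continuous_on UNIV (g :: 'x \<Rightarrow> real) \<and> open U}"
      unfolding W2_def using \<phi>(1) by (intro CollectI exI[of _ \<phi>] exI[of _ "{..< - a + e}"]) simp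
  qed
  have m0: "\<mu>0 \<in> prob_measures" using mu0 unfolding nonatomic_measures_def by blast
  have "(\<integral>x. - h x \<partial>\<mu>0) = - a" unfolding a_def by (rule integral_minus)
  then have in0: "\<mu>0 \<in> W1 \<inter> W2" unfolding W1_def W2_def using m0 \<psi>(4) \<phi>(4) a_def by auto
  have good: "\<bar>(\<integral>x. h x \<partial>\<mu>) - a\<bar> < e" if mu: "\<mu> \<in> W1 \<inter> W2" for \<mu>
  proof -
    have sm: "sets \<mu> = sets borel" and ps: "prob_space \<mu>"
      using mu unfolding W1_def prob_measures_def by auto
    have fm: "finite_measure \<mu>" using ps unfolding prob_space_def by blast
    have meas: "f \<in> borel_measurable \<mu>" if "f \<in> borel_measurable borel" for f :: "'x \<Rightarrow> real"
      using that measurable_cong_sets[OF sm refl] by blast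
    have int: "integrable \<mu> f" if "f \<in> borel_measurable borel" "\<And>x. \<bar>f x\<bar> \<le> B" for f :: "'x \<Rightarrow> real"
      by (rule finite_measure.integrable_const_bound[OF fm _ meas[OF that(1)], where B=B]) (use that(2) in simp)
    have ih: "integrable \<mu> h" by (rule int[OF hm hb])
    have ip: "integrable \<mu> \<psi>" by (rule int[OF borel_measurable_continuous_onI[OF \<psi>(1)]]) (use \<psi>(3) in blast)
    have iq: "integrable \<mu> \<phi>" by (rule int[OF borel_measurable_continuous_onI[OF \<phi>(1)]]) (use \<phi>(3) in blast)
    have "(\<integral>x. h x \<partial>\<mu>) \<le> (\<integral>x. \<psi> x \<partial>\<mu>)" by (rule integral_mono[OF ih ip]) (use \<psi>(2) in blast)
    moreover have "(\<integral>x. \<psi> x \<partial>\<mu>) < a + e" using mu unfolding W1_def by auto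
    moreover have "(\<integral>x. - h x \<partial>\<mu>) \<le> (\<integral>x. \<phi> x \<partial>\<mu>)"
      by (rule integral_mono[OF _ iq]) (use ih \<phi>(2) in auto)
    moreover have "(\<integral>x. \<phi> x \<partial>\<mu>) < - a + e" using mu unfolding W2_def by auto
    moreover have "(\<integral>x. - h x \<partial>\<mu>) = - (\<integral>x. h x \<partial>\<mu>)" by (rule integral_minus)
    ultimately show ?thesis by linarith
  qed
  show ?thesis
  proof (intro exI conjI ballI)
    show "openin weak_star (W1 \<inter> W2)" using o1 o2 by (rule openin_Int)
    show "\<mu>0 \<in> W1 \<inter> W2" by (rule in0)
    fix \<mu> assume "\<mu> \<in> W1 \<inter> W2 \<inter> nonatomic_measures"
    then show "\<bar>(\<integral>x. g (s x) \<partial>\<mu>) - (\<integral>x. g (s x) \<partial>\<mu>0)\<bar> < e"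
      using good[of \<mu>] unfolding a_def h_def by blast
  qed
qed

lemma topspace_weak_star: "topspace (weak_star :: 'a::topological_space measure topology) = prob_measures"
  unfolding weak_star_def topology_generated_by_topspace
proof (intro equalityI subsetI)
  fix M assume "M \<in> \<Union> {{M \<in> prob_measures. (\<integral>x. g x \<partial>M) \<in> U} | g U. continuous_on UNIV (g :: 'a \<Rightarrow> real) \<and> open U}"
  then show "M \<in> prob_measures" by blast
next
  fix M :: "'a measure" assume M: "M \<in> prob_measures"
  have "{M \<in> prob_measures. (\<integral>x. (\<lambda>_. 0::real) x \<partial>M) \<in> UNIV} \<in> {{M \<in> prob_measures. (\<integral>x. g x \<partial>M) \<in> U} | g U. continuous_on UNIV (g :: 'a \<Rightarrow> real) \<and> open U}"
    by (intro CollectI exI[of _ "\<lambda>_. 0::real"] exI[of _ "UNIV :: real set"]) simp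
  moreover have "M \<in> {M \<in> prob_measures. (\<integral>x. (\<lambda>_. 0::real) x \<partial>M) \<in> UNIV}" using M by simp
  ultimately show "M \<in> \<Union> {{M \<in> prob_measures. (\<integral>x. g x \<partial>M) \<in> U} | g U. continuous_on UNIV (g :: 'a \<Rightarrow> real) \<and> open U}"
    by blast
qed

lemma cont_into_weak_star:
  fixes f :: "'b \<Rightarrow> 'a::topological_space measure"
  assumes "\<And>g U. continuous_on UNIV (g :: 'a \<Rightarrow> real) \<Longrightarrow> open U \<Longrightarrow>
      openin T1 (f -` {M \<in> prob_measures. (\<integral>x. g x \<partial>M) \<in> U} \<inter> topspace T1)"
    and "f ` topspace T1 \<subseteq> prob_measures"
  shows "continuous_map T1 weak_star f"
proof -
  have "continuous_map T1 (topology_generated_by {{M \<in> prob_measures. (\<integral>x. g x \<partial>M) \<in> U} | g U. continuous_on UNIV (g :: 'a \<Rightarrow> real) \<and> open U}) f"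
  proof (rule continuous_on_generated_topo)
    fix V assume "V \<in> {{M \<in> prob_measures. (\<integral>x. g x \<partial>M) \<in> U} | g U. continuous_on UNIV (g :: 'a \<Rightarrow> real) \<and> open U}"
    then obtain g U where "V = {M \<in> prob_measures. (\<integral>x. g x \<partial>M) \<in> U}" "continuous_on UNIV (g :: 'a \<Rightarrow> real)" "open U"
      by blast
    then show "openin T1 (f -` V \<inter> topspace T1)" using assms(1) by blast
  next
    show "f ` topspace T1 \<subseteq> \<Union> {{M \<in> prob_measures. (\<integral>x. g x \<partial>M) \<in> U} | g U. continuous_on UNIV (g :: 'a \<Rightarrow> real) \<and> open U}"
      using assms(2) topspace_weak_star[where 'a='a] unfolding weak_star_def topology_generated_by_topspace by simp
  qed
  then show ?thesis unfolding weak_star_def .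
qed

theorem lemma3p5:
  fixes act :: "'g::{group_add, countable} \<Rightarrow> 'x::metric_space \<Rightarrow> 'x"
    and actf :: "'g \<Rightarrow> 'y::metric_space \<Rightarrow> 'y"
    and x1 :: 'x
    and f :: "'x \<Rightarrow> real"
    and \<pi> :: "'y \<Rightarrow> 'x"
  assumes "infinite (UNIV :: 'g set)"
    and "compact (UNIV :: 'x set)"
    and "minimal_continuous_action act"
    and "\<exists>x y. orbit act x \<noteq> orbit act y"
    and "\<forall>g. act g x1 = x1 \<longrightarrow> g = 0"
    and "continuous_on (UNIV - {x1}) f"
    and "f ` (UNIV - {x1}) \<subseteq> {1, -1}"
    and "\<not> (\<exists>F. continuous_on UNIV F \<and> (\<forall>x. x \<noteq> x1 \<longrightarrow> F x = f x))"
    and "compact (UNIV :: 'y set)"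
    and "minimal_continuous_action actf"
    and "continuous_on UNIV \<pi>"
    and "surj \<pi>"
    and "\<forall>g y. \<pi> (actf g y) = act g (\<pi> y)"
    and "\<forall>x. x \<notin> orbit act x1 \<longrightarrow> card (\<pi> -` {x}) = 1"
    and "\<forall>x. x \<in> orbit act x1 \<longrightarrow> card (\<pi> -` {x}) = 2"
    and "\<exists>F. continuous_on UNIV F \<and> (\<forall>y. \<pi> y \<noteq> x1 \<longrightarrow> F y = f (\<pi> y))"
  shows "(\<forall>\<mu>\<in>nonatomic_measures. \<exists>!\<nu>. \<nu> \<in> prob_measures \<and> push \<pi> \<nu> = \<mu>)
    \<and> continuous_map (subtopology weak_star nonatomic_measures) weak_star
        (\<lambda>\<mu>. THE \<nu>. \<nu> \<in> prob_measures \<and> push \<pi> \<nu> = \<mu>)"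
proof -
  define Ob where "Ob = orbit act x1"
  have Oc: "countable Ob" unfolding Ob_def orbit_def by (rule countable_image[OF countableI_type])
  have uq: "\<exists>!y. \<pi> y = x" if "x \<notin> Ob" for x
  proof -
    have "card (\<pi> -` {x}) = 1" using assms(14) that unfolding Ob_def by blast
    then obtain y where y: "\<pi> -` {x} = {y}" by (auto simp: card_1_singleton_iff)
    show ?thesis
    proof (rule ex1I[of _ y])
      show "\<pi> y = x" using y by blast
      fix z assume "\<pi> z = x" then show "z = y" using y by blast
    qed
  qed
  interpret sect \<pi> Ob
    using assms(9,11,12) Oc uq by unfold_locales auto
  have T: "(THE \<nu>. \<nu> \<in> prob_measures \<and> push \<pi> \<nu> = \<mu>) = distr \<mu> borel s"
    if "\<mu> \<in> nonatomic_measures" for \<mu>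
    using lift_iff[OF that] by simp
  have part1: "\<forall>\<mu>\<in>nonatomic_measures. \<exists>!\<nu>. \<nu> \<in> prob_measures \<and> push \<pi> \<nu> = \<mu>"
    using lift_iff by simp
  have na_sub: "nonatomic_measures \<subseteq> (prob_measures :: 'x measure set)"
    unfolding nonatomic_measures_def by blast
  have top1: "topspace (subtopology weak_star nonatomic_measures) = (nonatomic_measures :: 'x measure set)"
    using na_sub by (simp add: topspace_weak_star Int_absorb1)
  have part2: "continuous_map (subtopology weak_star nonatomic_measures) weak_star
        (\<lambda>\<mu>. THE \<nu>. \<nu> \<in> prob_measures \<and> push \<pi> \<nu> = \<mu>)"
  proof (rule cont_into_weak_star)
    show "(\<lambda>\<mu>. THE \<nu>. \<nu> \<in> prob_measures \<and> push \<pi> \<nu> = \<mu>) ` topspace (subtopology weak_star nonatomic_measures) \<subseteq> prob_measures"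
      unfolding top1
    proof (intro image_subsetI)
      fix \<mu> :: "'x measure" assume mu: "\<mu> \<in> nonatomic_measures"
      show "(THE \<nu>. \<nu> \<in> prob_measures \<and> push \<pi> \<nu> = \<mu>) \<in> prob_measures"
        unfolding T[OF mu] using lift_iff[OF mu, of "distr \<mu> borel s"] by simp
    qed
  next
    fix g :: "'y \<Rightarrow> real" and U :: "real set"
    assume g: "continuous_on UNIV g" and U: "open U"
    let ?T = "\<lambda>\<mu>. THE \<nu>. \<nu> \<in> prob_measures \<and> push \<pi> \<nu> = \<mu>"
    have eqZ: "?T -` {M \<in> prob_measures. (\<integral>x. g x \<partial>M) \<in> U} \<inter> topspace (subtopology weak_star nonatomic_measures)
        = {\<mu> \<in> nonatomic_measures. (\<integral>x. g (s x) \<partial>\<mu>) \<in> U}"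
    proof (intro equalityI subsetI)
      fix \<mu> assume "\<mu> \<in> ?T -` {M \<in> prob_measures. (\<integral>x. g x \<partial>M) \<in> U} \<inter> topspace (subtopology weak_star nonatomic_measures)"
      then have mu: "\<mu> \<in> nonatomic_measures" and i: "(\<integral>x. g x \<partial>distr \<mu> borel s) \<in> U"
        unfolding top1 by (auto simp: T)
      have sm: "sets \<mu> = sets borel" using mu unfolding nonatomic_measures_def prob_measures_def by auto
      have "(\<integral>x. g x \<partial>distr \<mu> borel s) = (\<integral>x. g (s x) \<partial>\<mu>)"
        by (rule integral_distr) (use s_meas measurable_cong_sets[OF sm refl] borel_measurable_continuous_onI[OF g] in auto)
      then show "\<mu> \<in> {\<mu> \<in> nonatomic_measures. (\<integral>x. g (s x) \<partial>\<mu>) \<in> U}" using mu i by simp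
    next
      fix \<mu> assume "\<mu> \<in> {\<mu> \<in> nonatomic_measures. (\<integral>x. g (s x) \<partial>\<mu>) \<in> U}"
      then have mu: "\<mu> \<in> nonatomic_measures" and i: "(\<integral>x. g (s x) \<partial>\<mu>) \<in> U" by auto
      have sm: "sets \<mu> = sets borel" using mu unfolding nonatomic_measures_def prob_measures_def by auto
      have "(\<integral>x. g x \<partial>distr \<mu> borel s) = (\<integral>x. g (s x) \<partial>\<mu>)"
        by (rule integral_distr) (use s_meas measurable_cong_sets[OF sm refl] borel_measurable_continuous_onI[OF g] in auto)
      moreover have "distr \<mu> borel s \<in> prob_measures" using lift_iff[OF mu, of "distr \<mu> borel s"] by simp
      ultimately show "\<mu> \<in> ?T -` {M \<in> prob_measures. (\<integral>x. g x \<partial>M) \<in> U} \<inter> topspace (subtopology weak_star nonatomic_measures)"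
        unfolding top1 using mu i by (simp add: T)
    qed
    show "openin (subtopology weak_star nonatomic_measures)
        (?T -` {M \<in> prob_measures. (\<integral>x. g x \<partial>M) \<in> U} \<inter> topspace (subtopology weak_star nonatomic_measures))"
      unfolding eqZ
    proof (subst openin_subopen, intro ballI)
      fix \<mu>0 assume "\<mu>0 \<in> {\<mu> \<in> nonatomic_measures. (\<integral>x. g (s x) \<partial>\<mu>) \<in> U}"
      then have mu0: "\<mu>0 \<in> nonatomic_measures" and i0: "(\<integral>x. g (s x) \<partial>\<mu>0) \<in> U" by auto
      obtain e where e: "e > 0" "ball (\<integral>x. g (s x) \<partial>\<mu>0) e \<subseteq> U" using U i0 openE by blast
      obtain W where W: "openin weak_star W" "\<mu>0 \<in> W"
        "\<forall>\<mu>\<in>W \<inter> nonatomic_measures. \<bar>(\<integral>x. g (s x) \<partial>\<mu>) - (\<integral>x. g (s x) \<partial>\<mu>0)\<bar> < e"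
        using nbhd[OF g mu0 e(1)] by blast
      show "\<exists>T. openin (subtopology weak_star nonatomic_measures) T \<and> \<mu>0 \<in> T \<and>
          T \<subseteq> {\<mu> \<in> nonatomic_measures. (\<integral>x. g (s x) \<partial>\<mu>) \<in> U}"
      proof (intro exI conjI subsetI)
        show "openin (subtopology weak_star nonatomic_measures) (nonatomic_measures \<inter> W)"
          by (rule openin_subtopology_Int2[OF W(1)])
        show "\<mu>0 \<in> nonatomic_measures \<inter> W" using mu0 W(2) by blast
        fix \<mu> assume mu: "\<mu> \<in> nonatomic_measures \<inter> W"
        then have "\<bar>(\<integral>x. g (s x) \<partial>\<mu>) - (\<integral>x. g (s x) \<partial>\<mu>0)\<bar> < e" using W(3) by blast
        then have "(\<integral>x. g (s x) \<partial>\<mu>) \<in> ball (\<integral>x. g (s x) \<partial>\<mu>0) e"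
          by (simp add: dist_real_def abs_minus_commute)
        then show "\<mu> \<in> {\<mu> \<in> nonatomic_measures. (\<integral>x. g (s x) \<partial>\<mu>) \<in> U}" using e(2) mu by blast
      qed
    qed
  qed
  show ?thesis using part1 part2 by blast
qed

end
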